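(* Let $R:\mathbb R^d\to(0,\infty)$ satisfy $|R(x)-R(y)|\le|x-y|$ for all $x,y$, and let $\rho(x,y)=\inf_\gamma\int_\gamma \frac{|dz|}{R(z)}$, the infimum over all piecewise $C^1$ curves $\gamma$ in $\mathbb R^d$ joining $x$ and $y$. Then for all $x,y\in\mathbb R^d$, $|x-y|\le\frac12R(x)$ implies $\rho(x,y)\le 1$. *)

theory Defs
  imports "HOL-Analysis.Analysis"
begin

definition path_cost_set :: "('a::euclidean_space \<Rightarrow> real) \<Rightarrow> 'a \<Rightarrow> 'a \<Rightarrow> real set" where
  "path_cost_set R x y =
     {I. \<exists>g. valid_path g \<and> pathstart g = x \<and> pathfinish g = y \<and>
          ((\<lambda>t. norm (vector_derivative g (at t)) / R (g t)) has_integral I) {0..1}}"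

definition rho :: "('a::euclidean_space \<Rightarrow> real) \<Rightarrow> 'a \<Rightarrow> 'a \<Rightarrow> real" where
  "rho R x y = Inf (path_cost_set R x y)"

end

theory Submission
  imports Defs
begin

theorem lemma1p4:
  fixes R :: "'a::euclidean_space \<Rightarrow> real" and x y :: 'a
  assumes pos: "\<And>z. R z > 0"
    and lip: "\<And>u v. \<bar>R u - R v\<bar> \<le> norm (u - v)"
    and close: "norm (x - y) \<le> R x / 2"
  shows "rho R x y \<le> 1"
proof -
  define g where "g = linepath x y"
  define f where "f = (\<lambda>t. norm (vector_derivative g (at t)) / R (g t))"
  have f_eq: "f = (\<lambda>t. norm (y - x) / R (g t))"
    unfolding f_def g_def by simp
  have contR: "continuous_on UNIV R"
  proof (rule continuous_onI)
    fix u e assume "(e::real) > 0"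
    then show "\<exists>d>0. \<forall>x'\<in>UNIV. dist x' u < d \<longrightarrow> dist (R x') (R u) \<le> e"
      by (intro exI[of _ e]) (auto simp: dist_norm dist_real_def intro: order_trans[OF lip] less_imp_le)
  qed
  have contg: "continuous_on {0..1} g" unfolding g_def by (simp add: continuous_on_linepath)
  have contRg: "continuous_on {0..1} (\<lambda>t. R (g t))"
    using continuous_on_compose2[OF contR contg] by simp
  have contf: "continuous_on {0..1} f"
    unfolding f_eq using pos
    by (intro continuous_intros contRg) (auto simp: less_imp_neq[symmetric])
  have int: "f integrable_on {0..1}"
    using contf integrable_continuous_interval by blast
  have bound: "f t \<le> 1" if t: "t \<in> {0..1}" for t
  proof -
    have "g t - x = t *\<^sub>R (y - x)"
      unfolding g_def linepath_def by (simp add: algebra_simps)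
    then have "norm (g t - x) = t * norm (y - x)" using t by simp
    also have "\<dots> \<le> norm (y - x)" using t mult_right_mono[of t 1 "norm (y - x)"] by simp
    finally have "norm (g t - x) \<le> norm (x - y)" by (simp add: norm_minus_commute)
    then have "R (g t) \<ge> R x / 2" using lip[of "g t" x] close by linarith
    then have "norm (y - x) \<le> R (g t)" using close by (simp add: norm_minus_commute)
    then show ?thesis unfolding f_eq using pos[of "g t"] by simp
  qed
  have nonneg: "0 \<le> f t" for t unfolding f_eq using pos[of "g t"] by simp
  have mem: "integral {0..1} f \<in> path_cost_set R x y"
    unfolding path_cost_set_def
    using int unfolding f_def g_def
    by (auto intro!: exI[of _ "linepath x y"])
  have le1: "integral {0..1} f \<le> 1"
  proof -
    have "integral {0..1} f \<le> integral {0..1} (\<lambda>t::real. 1::real)"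
      using int bound by (intro integral_le) auto
    then show ?thesis by simp
  qed
  have bdd: "bdd_below (path_cost_set R x y)"
  proof (rule bdd_belowI)
    fix I assume "I \<in> path_cost_set R x y"
    then obtain h where "((\<lambda>t. norm (vector_derivative h (at t)) / R (h t)) has_integral I) {0..1}"
      unfolding path_cost_set_def by blast
    then show "0 \<le> I" by (rule has_integral_nonneg) (use pos in \<open>auto intro!: divide_nonneg_pos\<close>)
  qed
  have "rho R x y \<le> integral {0..1} f"
    unfolding rho_def using cInf_lower[OF mem bdd] .
  with le1 show ?thesis by simp
qed

end
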